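(* Let $Z$ be a compact metrisable space, let $\mathfrak{X}$ be a $Z$-valued switched Bebutov shift, and let $\phi\in\mathfrak{X}$ be recurrent with respect to the shift semiflow $(\sigma^t)_{t\ge0}$. Then for every $s\ge0$ there exists $\psi\in\mathfrak{X}$ such that $\sigma^s\psi=\phi$.
   Context: $C([0,\infty),Z)$ carries the compact-open topology (uniform convergence on compact sets). $(\sigma^\tau\phi)(t)\coloneq\phi(\tau+t)$. A $Z$-valued Bebutov shift is a set $\mathfrak{X}\subseteq C([0,\infty),Z)$, compact in the compact-open topology, with $\sigma^\tau\phi\in\mathfrak{X}$ for all $\phi\in\mathfrak{X}$, $\tau\ge0$. It is switched if moreover: whenever $\phi_1,\phi_2\in\mathfrak{X}$ satisfy $\phi_1(\tau)=\phi_2(\tau)$ for some $\tau>0$, the function equal to $\phi_1$ on $[0,\tau]$ and to $\phi_2$ on $[\tau,\infty)$ belongs to $\mathfrak{X}$. $\phi$ is recurrent if there exist $t_n\to\infty$ with $\sigma^{t_n}\phi\to\phi$ in the compact-open topology. *)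

theory Defs
  imports "HOL-Analysis.Analysis"
begin

text \<open>Elements of C([0,\<infinity>),Z) are represented as functions real => 'z that are
continuous on [0,\<infinity>) and equal to undefined on the negative reals (extensional convention).\<close>

definition Cpos :: "(real \<Rightarrow> 'z::topological_space) set" where
  "Cpos = {f. continuous_on {0..} f \<and> (\<forall>t<0. f t = undefined)}"

definition compact_open_topology :: "(real \<Rightarrow> 'z::topological_space) topology" where
  "compact_open_topology =
     subtopology (topology_generated_by
        {{f. f ` K \<subseteq> U} | K U. compact K \<and> K \<subseteq> {0..} \<and> open U}) Cpos"

definition bshift :: "real \<Rightarrow> (real \<Rightarrow> 'z) \<Rightarrow> (real \<Rightarrow> 'z)" where
  "bshift \<tau> \<phi> = (\<lambda>t. if 0 \<le> t then \<phi> (\<tau> + t) else undefined)"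

definition bebutov_shift :: "(real \<Rightarrow> 'z::topological_space) set \<Rightarrow> bool" where
  "bebutov_shift X \<longleftrightarrow> X \<subseteq> Cpos \<and> compactin compact_open_topology X \<and>
     (\<forall>\<phi>\<in>X. \<forall>\<tau>\<ge>0. bshift \<tau> \<phi> \<in> X)"

definition switched_bebutov_shift :: "(real \<Rightarrow> 'z::topological_space) set \<Rightarrow> bool" where
  "switched_bebutov_shift X \<longleftrightarrow> bebutov_shift X \<and>
     (\<forall>\<phi>1\<in>X. \<forall>\<phi>2\<in>X. \<forall>\<tau>>0. \<phi>1 \<tau> = \<phi>2 \<tau> \<longrightarrow>
        (\<lambda>t. if t \<le> \<tau> then \<phi>1 t else \<phi>2 t) \<in> X)"

definition recurrent :: "(real \<Rightarrow> 'z::topological_space) \<Rightarrow> bool" where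
  "recurrent \<phi> \<longleftrightarrow> (\<exists>t::nat \<Rightarrow> real. filterlim t at_top sequentially \<and>
     limitin compact_open_topology (\<lambda>n. bshift (t n) \<phi>) \<phi> sequentially)"

end

theory Submission
  imports Defs
begin

lemma cluster_pt:
  fixes x :: "nat \<Rightarrow> 'a"
  assumes "compactin T X" "\<forall>n. x n \<in> X"
  shows "\<exists>p\<in>X. \<forall>W. openin T W \<and> p \<in> W \<longrightarrow> (\<forall>N. \<exists>n\<ge>N. x n \<in> W)"
proof (rule ccontr)
  assume H: "\<not> ?thesis"
  have "\<exists>W N. openin T W \<and> p \<in> W \<and> (\<forall>n\<ge>N. x n \<notin> W)" if "p \<in> X" for p
    using H that by (meson not_le)
  then obtain W N where WN: "\<And>p. p \<in> X \<Longrightarrow> openin T (W p) \<and> p \<in> W p \<and> (\<forall>n\<ge>N p. x n \<notin> W p)"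
    by metis
  have c: "X \<subseteq> topspace T \<and> (\<forall>\<U>. (\<forall>U\<in>\<U>. openin T U) \<and> X \<subseteq> \<Union>\<U> \<longrightarrow>
      (\<exists>\<F>. finite \<F> \<and> \<F> \<subseteq> \<U> \<and> X \<subseteq> \<Union>\<F>))"
    using assms(1) unfolding compactin_def .
  have o: "\<forall>U\<in>W ` X. openin T U" using WN by auto
  have cov: "X \<subseteq> \<Union>(W ` X)" using WN by auto
  obtain F where F: "finite F" "F \<subseteq> W ` X" "X \<subseteq> \<Union>F" using c o cov by meson
  then obtain G where G: "G \<subseteq> X" "finite G" "F = W ` G" by (meson finite_subset_image)
  define M where "M = (\<Sum>p\<in>G. N p)"
  have "x M \<in> X" using assms(2) by simp
  then have "x M \<in> \<Union>(W ` G)" using F G by auto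
  then obtain p where p: "p \<in> G" "x M \<in> W p" by auto
  have "N p \<le> M" unfolding M_def using p G by (simp add: member_le_sum)
  moreover have "p \<in> X" using p G by auto
  ultimately show False using WN[of p] p by auto
qed


lemma open_pt:
  fixes U :: "'z::topological_space set"
  assumes "open U" "t \<ge> 0"
  shows "openin compact_open_topology ({f. f ` {t} \<subseteq> U} \<inter> Cpos)"
proof -
  define S :: "(real \<Rightarrow> 'z) set set" where "S = {{f. f ` K \<subseteq> U} | K U. compact K \<and> K \<subseteq> {0..} \<and> open U}"
  have "{f. f ` {t} \<subseteq> U} \<in> S"
    unfolding S_def
    apply (rule CollectI)
    apply (rule exI[of _ "{t}"])
    apply (rule exI[of _ U])
    using assms by simp
  then have "openin (topology_generated_by S) {f. f ` {t} \<subseteq> (U::'z set)}"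
    by (rule topology_generated_by_Basis)
  then show ?thesis unfolding compact_open_topology_def S_def[symmetric] openin_subtopology
    by (intro exI[of _ "{f. f ` {t} \<subseteq> U}"]) simp
qed

theorem lemma2p20:
  fixes X :: "(real \<Rightarrow> 'z::metric_space) set" and \<phi> :: "real \<Rightarrow> 'z"
  assumes "compact (UNIV :: 'z set)"
    and "switched_bebutov_shift X"
    and "\<phi> \<in> X"
    and "recurrent \<phi>"
  shows "\<forall>s\<ge>0. \<exists>\<psi>\<in>X. bshift s \<psi> = \<phi>"
proof (intro allI impI)
  fix s :: real assume s: "s \<ge> 0"
  have XC: "X \<subseteq> Cpos" and cX: "compactin compact_open_topology X"
    and sh: "\<And>f \<tau>. f \<in> X \<Longrightarrow> \<tau> \<ge> 0 \<Longrightarrow> bshift \<tau> f \<in> X"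
    using assms(2) unfolding switched_bebutov_shift_def bebutov_shift_def by auto
  obtain tt :: "nat \<Rightarrow> real" where tt: "filterlim tt at_top sequentially"
    and lim: "limitin compact_open_topology (\<lambda>n. bshift (tt n) \<phi>) \<phi> sequentially"
    using assms(4) unfolding recurrent_def by blast
  define x where "x n = bshift (max 0 (tt n - s)) \<phi>" for n
  have xX: "\<forall>n. x n \<in> X" unfolding x_def using sh assms(3) by simp
  obtain \<psi> where \<psi>X: "\<psi> \<in> X"
    and cl: "\<And>W. openin compact_open_topology W \<Longrightarrow> \<psi> \<in> W \<Longrightarrow> (\<forall>N. \<exists>n\<ge>N. x n \<in> W)"
    using cluster_pt[OF cX xX] by blast
  obtain N0 where N0: "\<And>n. n \<ge> N0 \<Longrightarrow> tt n \<ge> s"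
    using tt unfolding filterlim_at_top eventually_sequentially by blast
  have "bshift s \<psi> t = \<phi> t" for t
  proof (cases "t \<ge> 0")
    case False
    then show ?thesis using XC assms(3) unfolding bshift_def Cpos_def by auto
  next
    case True
    show ?thesis
    proof (rule ccontr)
      assume ne: "bshift s \<psi> t \<noteq> \<phi> t"
      then have ne': "\<psi> (s + t) \<noteq> \<phi> t" using True unfolding bshift_def by simp
      obtain U V where UV: "open U" "open V" "\<psi> (s + t) \<in> U" "\<phi> t \<in> V" "U \<inter> V = {}"
        using separation_t2[THEN iffD1, OF ne'] by blast
      have "openin compact_open_topology ({f. f ` {s + t} \<subseteq> U} \<inter> Cpos)"
        using open_pt[OF UV(1)] s True by simp
      moreover have "\<psi> \<in> {f. f ` {s + t} \<subseteq> U} \<inter> Cpos" using UV \<psi>X XC by auto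
      ultimately have fr: "\<forall>N. \<exists>n\<ge>N. x n \<in> {f. f ` {s + t} \<subseteq> U} \<inter> Cpos" using cl by blast
      have "openin compact_open_topology ({f. f ` {t} \<subseteq> V} \<inter> Cpos)"
        using open_pt[OF UV(2)] True by simp
      moreover have "\<phi> \<in> {f. f ` {t} \<subseteq> V} \<inter> Cpos" using UV assms(3) XC by auto
      ultimately have "eventually (\<lambda>n. bshift (tt n) \<phi> \<in> {f. f ` {t} \<subseteq> V} \<inter> Cpos) sequentially"
        using lim unfolding limitin_def by blast
      then obtain N1 where N1: "\<And>n. n \<ge> N1 \<Longrightarrow> bshift (tt n) \<phi> t \<in> V"
        unfolding eventually_sequentially by auto
      obtain n where n: "n \<ge> max N0 N1" "x n (s + t) \<in> U" 
      proof -
        obtain n where "n \<ge> max N0 N1" "x n \<in> {f. f ` {s + t} \<subseteq> U} \<inter> Cpos"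
          using fr by blast
        then show ?thesis using that by simp
      qed
      have "tt n \<ge> s" using N0 n by simp
      then have "x n (s + t) = \<phi> (tt n + t)" unfolding x_def bshift_def using s True by simp
      moreover have "bshift (tt n) \<phi> t = \<phi> (tt n + t)" unfolding bshift_def using True by simp
      ultimately show False using N1[of n] n UV(5) by auto
    qed
  qed
  then show "\<exists>\<psi>\<in>X. bshift s \<psi> = \<phi>" using \<psi>X by blast
qed

end
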